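(* Let $(\Omega,\mathcal{F},\mathbf{P})$ be a probability space and $\theta\colon\Omega\to\Omega$ an ergodic automorphism. Let $A$ be an $N\times N$ matrix with all entries positive, and let $D(\omega)=\mathrm{diag}(d_1(\omega),\dots,d_N(\omega))$ be measurable with $d_i(\omega)>0$ and $\ln^{+}(\max_i d_i(\cdot))\in L_1(\Omega,\mathcal{F},\mathbf{P})$; put $S(\omega)=AD(\omega)$. Suppose $\Omega_0\in\mathcal{F}$ with $\theta(\Omega_0)=\Omega_0$, $\mathbf{P}(\Omega_0)=1$, $w=(w_1,\dots,w_N)\colon\Omega_0\to\mathbb{R}^N$ is measurable with $w(\omega)$ a positive vector and $\|w(\omega)\|=1$ for all $\omega\in\Omega_0$, and $\rho\colon\Omega_0\to(0,\infty)$ satisfies $S(\omega)w(\omega)=\rho(\omega)w(\theta\omega)$ for all $\omega\in\Omega_0$ (such objects exist, with $\lim_{n\to\infty}\frac1n\ln\|S^{(n)}(\omega)w(\omega)\|$ equal to the top Lyapunov exponent on $\Omega_0$). Then for each $1\le i\le N$ the function $\ln w_i(\cdot)$ is bounded uniformly on $\Omega_0$.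
   Context: $\|\cdot\|$ denotes the Euclidean norm; a positive vector has all coordinates positive; $S^{(n)}(\omega)=S(\theta^{n-1}\omega)\cdots S(\omega)$. *)

theory Defs
  imports "HOL-Probability.Probability"
begin

definition mp_automorphism :: "'a measure \<Rightarrow> ('a \<Rightarrow> 'a) \<Rightarrow> bool" where
  "mp_automorphism M T \<longleftrightarrow>
     T \<in> measurable M M \<and> bij_betw T (space M) (space M) \<and>
     the_inv_into (space M) T \<in> measurable M M \<and>
     (\<forall>B\<in>sets M. measure M (T -` B \<inter> space M) = measure M B)"

definition ergodic_automorphism :: "'a measure \<Rightarrow> ('a \<Rightarrow> 'a) \<Rightarrow> bool" where
  "ergodic_automorphism M T \<longleftrightarrow> mp_automorphism M T \<and>
     (\<forall>B\<in>sets M. T -` B \<inter> space M = B \<longrightarrow> measure M B = 0 \<or> measure M B = 1)"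

definition ln_plus :: "real \<Rightarrow> real" where
  "ln_plus x = max 0 (ln x)"

definition diag_mat :: "real ^ 'n \<Rightarrow> real ^ 'n ^ 'n" where
  "diag_mat v = (\<chi> i j. if i = j then v $ i else 0)"

end

theory Submission
  imports Defs
begin

lemma S_comp:
  fixes A :: "real ^ 'n ^ 'n"
  shows "((A ** diag_mat v) *v x) $ i = (\<Sum>j\<in>UNIV. A $ i $ j * (v $ j * x $ j))"
proof -
  have "diag_mat v *v x = (\<chi> j. v $ j * x $ j)"
  proof (rule vec_eq_iff[THEN iffD2, OF allI])
    fix i
    have "(\<Sum>j\<in>UNIV. (if i = j then v $ i else 0) * x $ j) = (\<Sum>j\<in>UNIV. if i = j then v $ i * x $ j else 0)"
      by (rule sum.cong) auto
    also have "\<dots> = v $ i * x $ i" by simp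
    finally show "(diag_mat v *v x) $ i = (\<chi> j. v $ j * x $ j) $ i"
      by (simp add: diag_mat_def matrix_vector_mult_def)
  qed
  then have "(A ** diag_mat v) *v x = A *v (\<chi> j. v $ j * x $ j)"
    by (metis matrix_vector_mul_assoc)
  then show ?thesis by (simp add: matrix_vector_mult_def)
qed

theorem lemma3p2:
  fixes M :: "'a measure" and \<theta> :: "'a \<Rightarrow> 'a"
    and A :: "real ^ 'n ^ 'n" and d :: "'a \<Rightarrow> real ^ 'n"
    and S :: "'a \<Rightarrow> real ^ 'n ^ 'n"
    and \<Omega>0 :: "'a set" and w :: "'a \<Rightarrow> real ^ 'n" and \<rho> :: "'a \<Rightarrow> real"
  assumes "prob_space M"
    and "ergodic_automorphism M \<theta>"
    and A_pos: "\<And>i j. A $ i $ j > 0"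
    and d_meas: "d \<in> borel_measurable M"
    and d_pos: "\<And>\<omega> i. \<omega> \<in> space M \<Longrightarrow> d \<omega> $ i > 0"
    and d_int: "integrable M (\<lambda>\<omega>. ln_plus (Max (range (\<lambda>i. d \<omega> $ i))))"
    and S_def: "\<And>\<omega>. S \<omega> = A ** diag_mat (d \<omega>)"
    and \<Omega>0_sets: "\<Omega>0 \<in> sets M"
    and \<Omega>0_inv: "\<theta> ` \<Omega>0 = \<Omega>0"
    and \<Omega>0_prob: "measure M \<Omega>0 = 1"
    and w_meas: "w \<in> borel_measurable (restrict_space M \<Omega>0)"
    and w_pos: "\<And>\<omega> i. \<omega> \<in> \<Omega>0 \<Longrightarrow> w \<omega> $ i > 0"
    and w_norm: "\<And>\<omega>. \<omega> \<in> \<Omega>0 \<Longrightarrow> norm (w \<omega>) = 1"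
    and \<rho>_pos: "\<And>\<omega>. \<omega> \<in> \<Omega>0 \<Longrightarrow> \<rho> \<omega> > 0"
    and eigen: "\<And>\<omega>. \<omega> \<in> \<Omega>0 \<Longrightarrow> S \<omega> *v w \<omega> = \<rho> \<omega> *\<^sub>R w (\<theta> \<omega>)"
  shows "\<forall>i. \<exists>C. \<forall>\<omega>\<in>\<Omega>0. \<bar>ln (w \<omega> $ i)\<bar> \<le> C"
proof
  fix i :: 'n
  define P where "P = range (\<lambda>p::'n\<times>'n. A $ fst p $ snd p)"
  have finP: "finite P" "P \<noteq> {}" unfolding P_def by auto
  define a where "a = Min P"
  define b where "b = Max P"
  have mem: "A $ k $ j \<in> P" for k j unfolding P_def by (rule image_eqI[where x="(k,j)"]) auto
  have aij: "a \<le> A $ k $ j" "A $ k $ j \<le> b" for k j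
    using finP mem[of k j] unfolding a_def b_def by auto
  have "a \<in> P" unfolding a_def using finP by (rule Min_in)
  then have apos: "a > 0" unfolding P_def using A_pos by auto
  have bpos: "b > 0" using aij(2) A_pos[of i i] by (meson less_le_trans)
  have key: "w \<omega>' $ k \<le> (b / a) * w \<omega>' $ i" if om: "\<omega>' \<in> \<Omega>0" for \<omega>' k
  proof -
    obtain \<omega> where om0: "\<omega> \<in> \<Omega>0" and th: "\<theta> \<omega> = \<omega>'" using om \<Omega>0_inv by (metis imageE)
    have sp: "\<omega> \<in> space M" using om0 sets.sets_into_space[OF \<Omega>0_sets] by (rule subsetD[rotated])
    define t where "t j = d \<omega> $ j * w \<omega> $ j" for j
    have tpos: "t j > 0" for j unfolding t_def using d_pos[OF sp] w_pos[OF om0] by simp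
    have e: "\<rho> \<omega> * w \<omega>' $ m = (\<Sum>j\<in>UNIV. A $ m $ j * t j)" for m
      using arg_cong[OF eigen[OF om0], of "\<lambda>v. v $ m"] th
      by (simp add: S_def S_comp t_def)
    have lo: "a * sum t UNIV \<le> (\<Sum>j\<in>UNIV. A $ i $ j * t j)"
      unfolding sum_distrib_left by (intro sum_mono mult_right_mono aij(1)) (simp add: less_imp_le tpos)
    have hi: "(\<Sum>j\<in>UNIV. A $ k $ j * t j) \<le> b * sum t UNIV"
      unfolding sum_distrib_left by (intro sum_mono mult_right_mono aij(2)) (simp add: less_imp_le tpos)
    have "\<rho> \<omega> * w \<omega>' $ k \<le> b * sum t UNIV" using e[of k] hi by simp
    also have "\<dots> = (b / a) * (a * sum t UNIV)" using apos by simp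
    also have "\<dots> \<le> (b / a) * (\<rho> \<omega> * w \<omega>' $ i)" using e[of i] lo apos bpos
      by (intro mult_left_mono) auto
    finally have "\<rho> \<omega> * w \<omega>' $ k \<le> \<rho> \<omega> * ((b / a) * w \<omega>' $ i)" by (simp add: algebra_simps)
    then show ?thesis using mult_le_cancel_left_pos[OF \<rho>_pos[OF om0]] by blast
  qed
  define c where "c = a / (b * real CARD('n))"
  have cpos: "c > 0" unfolding c_def using apos bpos by simp
  have lowb: "c \<le> w \<omega> $ i" if om: "\<omega> \<in> \<Omega>0" for \<omega>
  proof -
    have "1 = norm (w \<omega>)" using w_norm[OF om] by simp
    also have "\<dots> \<le> (\<Sum>k\<in>UNIV. \<bar>w \<omega> $ k\<bar>)" by (rule norm_le_l1_cart)
    also have "\<dots> \<le> (\<Sum>k\<in>(UNIV::'n set). (b / a) * w \<omega> $ i)"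
      using key[OF om] w_pos[OF om] by (intro sum_mono) (simp add: less_imp_le)
    also have "\<dots> = real CARD('n) * (b / a) * w \<omega> $ i" by simp
    finally have "1 \<le> real CARD('n) * (b / a) * w \<omega> $ i" .
    then show ?thesis unfolding c_def using apos bpos
      by (simp add: field_simps)
  qed
  show "\<exists>C. \<forall>\<omega>\<in>\<Omega>0. \<bar>ln (w \<omega> $ i)\<bar> \<le> C"
  proof (intro exI ballI)
    fix \<omega> assume om: "\<omega> \<in> \<Omega>0"
    have w1: "w \<omega> $ i \<le> 1" using component_le_norm_cart[of "w \<omega>" i] w_norm[OF om] by simp
    have wp: "w \<omega> $ i > 0" using w_pos[OF om] .
    have "ln (w \<omega> $ i) \<le> 0" using w1 wp by simp
    moreover have "ln c \<le> ln (w \<omega> $ i)" using lowb[OF om] cpos by simp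
    ultimately show "\<bar>ln (w \<omega> $ i)\<bar> \<le> - ln c" by simp
  qed
qed

end
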